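(* Let $X,Y$ be Banach lattices and $S\colon X\to Y$ convex. Then the following are equivalent: (i) $S$ is continuous; (ii) for every $x\in X$ there exists $r>0$ such that $\|S_x\|_r<\infty$.
   Context: An operator $S\colon X\to Y$ is convex if $S(\lambda x+(1-\lambda)y)\le\lambda Sx+(1-\lambda)Sy$ for all $x,y\in X$, $\lambda\in[0,1]$. $S_xy:=S(x+y)-Sx$ for $x,y\in X$, and $\|T\|_r:=\sup_{\|y\|\le r}\|Ty\|$. *)

theory Defs
  imports "HOL-Analysis.Analysis"
begin

text \<open>Banach lattice: a real Banach space which is a vector lattice (Riesz space:
  lattice order compatible with addition and positive scalar multiplication) and whose
  norm is a lattice norm, i.e. |x| \<le> |y| implies norm x \<le> norm y, where |x| = x \<squnion> -x.\<close>
class banach_lattice = banach + lattice + ordered_real_vector +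
  assumes lattice_norm: "sup x (- x) \<le> sup y (- y) \<Longrightarrow> norm x \<le> norm y"

definition convex_op :: "('a::real_vector \<Rightarrow> 'b::ordered_real_vector) \<Rightarrow> bool" where
  "convex_op S \<longleftrightarrow> (\<forall>x y. \<forall>l::real. 0 \<le> l \<and> l \<le> 1 \<longrightarrow>
      S (l *\<^sub>R x + (1 - l) *\<^sub>R y) \<le> l *\<^sub>R S x + (1 - l) *\<^sub>R S y)"

definition shift_op :: "('a::real_vector \<Rightarrow> 'b::real_vector) \<Rightarrow> 'a \<Rightarrow> 'a \<Rightarrow> 'b" where
  "shift_op S x = (\<lambda>y. S (x + y) - S x)"

definition rnorm :: "('a::real_normed_vector \<Rightarrow> 'b::real_normed_vector) \<Rightarrow> real \<Rightarrow> ereal" where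
  "rnorm T r = (SUP y \<in> {y. norm y \<le> r}. ereal (norm (T y)))"

end

theory Submission
  imports Defs
begin

lemma bl_abs_nonneg:
  fixes z :: "'b::banach_lattice"
  shows "0 \<le> sup z (- z)"
proof -
  let ?s = "sup z (- z)"
  have "z + - z \<le> ?s + ?s" by (rule add_mono) auto
  hence "0 \<le> ?s + ?s" by simp
  hence "(1/2::real) *\<^sub>R 0 \<le> (1/2::real) *\<^sub>R (?s + ?s)" by (rule scaleR_left_mono) simp
  also have "(1/2::real) *\<^sub>R (?s + ?s) = ?s" by (simp add: scaleR_2 [symmetric])
  finally show ?thesis by simp
qed

lemma bl_abs_pos:
  fixes v :: "'b::banach_lattice"
  assumes "0 \<le> v"
  shows "sup v (- v) = v"
proof -
  have "- v \<le> v" using assms by (meson neg_le_0_iff_le order_trans)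
  thus ?thesis by (simp add: sup_absorb1)
qed

lemma bl_norm_abs:
  fixes a :: "'b::banach_lattice"
  shows "norm (sup a (- a)) \<le> norm a"
  by (rule lattice_norm) (simp add: bl_abs_pos[OF bl_abs_nonneg])

lemma bl_sandwich:
  fixes D a b :: "'b::banach_lattice"
  assumes t: "0 \<le> t" and l: "- (t *\<^sub>R b) \<le> D" and u: "D \<le> t *\<^sub>R a"
  shows "norm D \<le> t * (norm a + norm b)"
proof -
  define u where "u = sup a (- a) + sup b (- b)"
  have u0: "0 \<le> u" unfolding u_def using bl_abs_nonneg add_nonneg_nonneg by blast
  have au: "a \<le> u" unfolding u_def
    using add_mono[OF sup_ge1[of a "-a"] bl_abs_nonneg[of b]] by simp
  have bu: "b \<le> u" unfolding u_def
    using add_mono[OF bl_abs_nonneg[of a] sup_ge1[of b "-b"]] by simp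
  have "D \<le> t *\<^sub>R u" using u scaleR_left_mono[OF au t] by (rule order_trans)
  moreover have "- D \<le> t *\<^sub>R u" using l scaleR_left_mono[OF bu t]
    by (metis minus_le_iff order_trans)
  ultimately have "sup D (- D) \<le> t *\<^sub>R u" by simp
  also have "\<dots> = sup (t *\<^sub>R u) (- (t *\<^sub>R u))"
    using bl_abs_pos[OF scaleR_nonneg_nonneg[OF t u0]] by simp
  finally have "norm D \<le> norm (t *\<^sub>R u)" by (rule lattice_norm)
  also have "\<dots> = t * norm u" using t by simp
  also have "norm u \<le> norm a + norm b" unfolding u_def
    using norm_triangle_ineq[of "sup a (-a)" "sup b (-b)"] bl_norm_abs[of a] bl_norm_abs[of b]
    by linarith
  finally show ?thesis using t by (simp add: mult_left_mono)
qed



lemma convex_local_lip: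
  fixes S :: "'a::banach_lattice \<Rightarrow> 'b::banach_lattice"
  assumes cv: "convex_op S" and r0: "r > 0"
    and M: "\<And>y. norm y \<le> r \<Longrightarrow> norm (S (x + y) - S x) \<le> M"
    and h: "norm h \<le> r"
  shows "norm (S (x + h) - S x) \<le> (norm h / r) * (2 * M)"
proof (cases "h = 0")
  case True thus ?thesis by simp
next
  case False
  define t where "t = norm h / r"
  define h' where "h' = (r / norm h) *\<^sub>R h"
  have nh: "norm h > 0" using False by simp
  have t0: "0 \<le> t" using r0 by (simp add: t_def)
  have t1: "t \<le> 1" using h r0 by (simp add: t_def)
  have th: "t *\<^sub>R h' = h" using nh r0 by (simp add: t_def h'_def)
  have nh': "norm h' = r" using nh r0 by (simp add: h'_def)
  define a where "a = S (x + h') - S x"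
  define b where "b = S (x + - h') - S x"
  have na: "norm a \<le> M" unfolding a_def using M nh' by simp
  have nb: "norm b \<le> M" unfolding b_def using M[of "- h'"] nh' by simp
  have c1: "S (t *\<^sub>R (x + h') + (1 - t) *\<^sub>R x) \<le> t *\<^sub>R S (x + h') + (1 - t) *\<^sub>R S x"
    using cv t0 t1 unfolding convex_op_def by blast
  have e1: "t *\<^sub>R (x + h') + (1 - t) *\<^sub>R x = x + h"
    using th by (simp add: algebra_simps)
  have e1': "t *\<^sub>R S (x + h') + (1 - t) *\<^sub>R S x = S x + t *\<^sub>R a"
    by (simp add: a_def algebra_simps)
  have up: "S (x + h) - S x \<le> t *\<^sub>R a"
    using c1 unfolding e1 e1' by (metis diff_le_eq add.commute)
  define l where "l = 1 / (1 + t)"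
  have l0: "0 \<le> l" and l1: "l \<le> 1" using t0 by (auto simp: l_def)
  have c2: "S (l *\<^sub>R (x + h) + (1 - l) *\<^sub>R (x + - h')) \<le> l *\<^sub>R S (x + h) + (1 - l) *\<^sub>R S (x + - h')"
    using cv l0 l1 unfolding convex_op_def by blast
  have "l *\<^sub>R (x + h) + (1 - l) *\<^sub>R (x + - h') = x + (l * t - (1 - l)) *\<^sub>R h'"
    using th by (simp add: algebra_simps flip: th)
  also have "l * t - (1 - l) = 0" using t0 by (simp add: l_def field_simps)
  finally have e2: "l *\<^sub>R (x + h) + (1 - l) *\<^sub>R (x + - h') = x" by simp
  have "(1 + t) *\<^sub>R S x \<le> (1 + t) *\<^sub>R (l *\<^sub>R S (x + h) + (1 - l) *\<^sub>R S (x + - h'))"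
    using scaleR_left_mono[OF c2[unfolded e2]] t0 by simp
  also have "\<dots> = S (x + h) + t *\<^sub>R S (x + - h')"
    using t0 by (simp add: l_def algebra_simps divide_simps)
  finally have c2': "(1 + t) *\<^sub>R S x \<le> S (x + h) + t *\<^sub>R S (x + - h')" .
  have "(1 + t) *\<^sub>R S x = S x + t *\<^sub>R S x" by (simp add: algebra_simps)
  hence "S x + t *\<^sub>R S x \<le> S (x + h) + t *\<^sub>R S (x + - h')" using c2' by simp
  hence lo: "- (t *\<^sub>R b) \<le> S (x + h) - S x"
    unfolding b_def by (simp add: algebra_simps le_diff_eq)
  have "norm (S (x + h) - S x) \<le> t * (norm a + norm b)"
    by (rule bl_sandwich[OF t0 lo up])
  also have "\<dots> \<le> t * (2 * M)" using na nb t0 by (intro mult_left_mono) auto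
  finally show ?thesis by (simp add: t_def)
qed


theorem lemmaA2:
  fixes S :: "'a::banach_lattice \<Rightarrow> 'b::banach_lattice"
  assumes "convex_op S"
  shows "continuous_on UNIV S \<longleftrightarrow>
           (\<forall>x. \<exists>r>0. rnorm (shift_op S x) r < \<infinity>)"
proof
  assume c: "continuous_on UNIV S"
  show "\<forall>x. \<exists>r>0. rnorm (shift_op S x) r < \<infinity>"
  proof
    fix x
    obtain d where d: "d > 0" "\<And>x'. dist x' x < d \<Longrightarrow> dist (S x') (S x) < 1"
      using c unfolding continuous_on_iff by (meson UNIV_I zero_less_one)
    have "rnorm (shift_op S x) (d/2) \<le> ereal 1"
      unfolding rnorm_def shift_op_def
    proof (rule SUP_least)
      fix y :: 'a assume "y \<in> {y. norm y \<le> d / 2}"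
      hence "dist (x + y) x < d" using d(1) by (simp add: dist_norm)
      hence "dist (S (x + y)) (S x) < 1" by (rule d(2))
      thus "ereal (norm (S (x + y) - S x)) \<le> ereal 1" by (simp add: dist_norm)
    qed
    hence "rnorm (shift_op S x) (d/2) < \<infinity>" using order.strict_trans1 by fastforce
    thus "\<exists>r>0. rnorm (shift_op S x) r < \<infinity>" using d(1) by (intro exI[of _ "d/2"]) simp
  qed
next
  assume b: "\<forall>x. \<exists>r>0. rnorm (shift_op S x) r < \<infinity>"
  show "continuous_on UNIV S"
    unfolding continuous_on_iff
  proof (intro ballI allI impI)
    fix x :: 'a and e :: real
    assume e: "e > 0"
    obtain r where r: "r > 0" "rnorm (shift_op S x) r < \<infinity>" using b by blast
    have up: "ereal (norm (S (x + y) - S x)) \<le> rnorm (shift_op S x) r" if "norm y \<le> r" for y :: 'a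
      unfolding rnorm_def shift_op_def by (rule SUP_upper) (use that in simp)
    have "ereal 0 \<le> rnorm (shift_op S x) r" using up[of 0] r(1) by simp
    then obtain M where M: "rnorm (shift_op S x) r = ereal M" "0 \<le> M"
      using r(2) by (cases "rnorm (shift_op S x) r") auto
    have Mb: "norm (S (x + y) - S x) \<le> M" if "norm y \<le> r" for y :: 'a
      using up[OF that] M(1) by simp
    define d where "d = min r (e * r / (2 * M + 1))"
    have d0: "d > 0" using r(1) e M(2) by (simp add: d_def)
    show "\<exists>d>0. \<forall>x'\<in>UNIV. dist x' x < d \<longrightarrow> dist (S x') (S x) < e"
    proof (intro exI[of _ d] conjI ballI impI d0)
      fix x' assume "dist x' x < d"
      hence hd: "norm (x' - x) < d" by (simp add: dist_norm)
      have hr: "norm (x' - x) \<le> r" using hd by (simp add: d_def)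
      have "norm (S (x + (x' - x)) - S x) \<le> (norm (x' - x) / r) * (2 * M)"
        by (rule convex_local_lip[OF assms r(1) Mb hr])
      also have "\<dots> \<le> (e * r / (2 * M + 1) / r) * (2 * M)"
        using hd r(1) M(2) by (intro mult_right_mono divide_right_mono) (auto simp: d_def)
      also have "\<dots> = e * (2 * M) / (2 * M + 1)" proof -
        have "e * r / (2 * M + 1) / r = e / (2 * M + 1)" using r(1) by simp
        thus ?thesis by simp
      qed
      also have "\<dots> < e" using e M(2) by (simp add: divide_simps)
      finally show "dist (S x') (S x) < e" by (simp add: dist_norm)
    qed
  qed
qed

end
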